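(* Let $d$ be odd, let $c_1\ge\cdots\ge c_u$ be odd positive integers with $c_1\le d$, and let $H=H_d(c_1,\dots,c_u)=C_d(A(0,c_1,\dots,c_u,1))$. Let $P$ be the first summit and $Q$ the last summit of $H$. If $u=0$, then $H$ has exactly $d$ summits, $\operatorname{char}P=(0,1)$ and $\operatorname{char}Q=(0,d)$. If $u\ge1$, let $t=\tfrac12(d-c_1)$; then $t\ge0$, $H$ has exactly $(u+2)t+1$ summits, $\operatorname{char}P=(0,c_1,\dots,c_u,1)$ and $\operatorname{char}Q=(0,c_1+2t,\dots,c_u+2t,1+2t)$.
   Context: Conventions: $k$ a field; linear Nakayama algebras are basic $kQ/I$ with $Q$ a linearly oriented path; modules are finitely generated left modules, indecomposables uniserial; $|M|$ length, $\operatorname{pd}$ projective dimension, $\tau$ Auslander–Reiten translation. Simples $S_1,\dots,S_n$ with $\tau S_i=S_{i-1}$; $\omega_A=S_n$ the simple injective. Even/odd indecomposable: parity of projective dimension. For indecomposable $M$ with composition factors $F_1=\operatorname{soc}M,\dots,F_m=\operatorname{top}M$, $\operatorname{char}M=(z_1,\dots,z_m)$ with $z_i=\operatorname{pd}F_i$ if $F_i$ odd, $z_i=\operatorname{pd}M$ if $F_i$ even. Height = maximal length of indecomposables; summits = indecomposables of maximal length. Concave: Kupisch series weakly increases then weakly decreases. For concave $A$: first summit = summit $P$ with $\operatorname{rad}P$ projective; last summit = summit $Q$ with $Q/\operatorname{soc}Q$ injective. $A(\mathbf z)$ (ascent algebra): for a projective characteristic sequence $\mathbf z$ (non-negative integers,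 exactly one even entry, equal to $0$), the unique ascending (weakly increasing Kupisch series) linear Nakayama algebra with $\operatorname{char}P(\omega_{A(\mathbf z)})=\mathbf z$. $C_d$ (partial $d$-closure): a simple $S$ is $d$-closed if torsionless or the socle of a module of projective dimension $\ge d$; the $d$-cliff module $Y_A=P(\omega_A)/U$ with $U$ the largest submodule of $P(\omega_A)$ with all composition factors $d$-closed; $E_d(A)$ is the one-point extension adding a simple $T=\tau^-\omega_A$ with $\operatorname{rad}P(T)\cong Y_A$ (or $A$ itself if $Y_A=0$); $C_d(A)=E_d^t(A)$ for $t$ with zero $d$-cliff module. *)

theory Defs
  imports Main
begin

text \<open>
Combinatorial model of linear Nakayama algebras (0-based vertices).
A linear Nakayama algebra with n simples is encoded by its Kupisch series
K = [c_0, ..., c_{n-1}] where c_b = length of P(S_b).  S_0 is the simple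
projective, S_{n-1} = omega is the simple injective, tau S_i = S_{i-1}.
The indecomposable (uniserial) modules are the intervals [a,b] with socle S_a,
top S_b and composition factors S_a, S_{a+1}, ..., S_b (socle to top),
subject to b + 1 - a \<le> c_b.  The projective cover of [a,b] is
P(S_b) = [b+1-c_b, b] and its syzygy is [b+1-c_b, a-1].
\<close>

definition kupisch :: "nat list \<Rightarrow> bool" where
  "kupisch K \<longleftrightarrow> K \<noteq> [] \<and> K ! 0 = 1 \<and>
     (\<forall>i. 0 < i \<and> i < length K \<longrightarrow> 2 \<le> K ! i \<and> K ! i \<le> K ! (i - 1) + 1)"

definition ismod :: "nat list \<Rightarrow> nat \<Rightarrow> nat \<Rightarrow> bool" where
  "ismod K a b \<longleftrightarrow> a \<le> b \<and> b < length K \<and> b + 1 - a \<le> K ! b"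

definition len :: "nat \<Rightarrow> nat \<Rightarrow> nat" where
  "len a b = b + 1 - a"

definition isproj :: "nat list \<Rightarrow> nat \<Rightarrow> nat \<Rightarrow> bool" where
  "isproj K a b \<longleftrightarrow> ismod K a b \<and> b + 1 - a = K ! b"

text \<open>An indecomposable is injective iff it is the longest uniserial with its socle.\<close>
definition isinj :: "nat list \<Rightarrow> nat \<Rightarrow> nat \<Rightarrow> bool" where
  "isinj K a b \<longleftrightarrow> ismod K a b \<and> \<not> ismod K a (b + 1)"

text \<open>Projective dimension of the indecomposable [a,b] (junk 0 outside modules).\<close>
function pd :: "nat list \<Rightarrow> nat \<Rightarrow> nat \<Rightarrow> nat" where
  "pd K a b = (if \<not> ismod K a b \<or> a = 0 \<or> b + 1 - a = K ! b then 0
               else Suc (pd K (b + 1 - K ! b) (a - 1)))"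
  by pat_completeness auto
termination
  by (relation "measure (\<lambda>(K, a, b). b)") (auto simp: ismod_def)

definition charm :: "nat list \<Rightarrow> nat \<Rightarrow> nat \<Rightarrow> nat list" where
  "charm K a b = map (\<lambda>i. if odd (pd K i i) then pd K i i else pd K a b) [a..<Suc b]"

definition height :: "nat list \<Rightarrow> nat" where
  "height K = Max {len a b | a b. ismod K a b}"

definition summit :: "nat list \<Rightarrow> nat \<Rightarrow> nat \<Rightarrow> bool" where
  "summit K a b \<longleftrightarrow> ismod K a b \<and> len a b = height K"

definition summits :: "nat list \<Rightarrow> (nat \<times> nat) set" where
  "summits K = {(a, b). summit K a b}"

text \<open>First summit: summit whose radical [a,b-1] is projective (zero if a = b).\<close>
definition first_summit :: "nat list \<Rightarrow> nat \<times> nat \<Rightarrow> bool" where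
  "first_summit K p \<longleftrightarrow> summit K (fst p) (snd p) \<and>
     (fst p = snd p \<or> isproj K (fst p) (snd p - 1))"

text \<open>Last summit: summit Q with Q / soc Q = [a+1,b] injective (zero if a = b).\<close>
definition last_summit :: "nat list \<Rightarrow> nat \<times> nat \<Rightarrow> bool" where
  "last_summit K p \<longleftrightarrow> summit K (fst p) (snd p) \<and>
     (fst p = snd p \<or> isinj K (fst p + 1) (snd p))"

definition ascending :: "nat list \<Rightarrow> bool" where
  "ascending K \<longleftrightarrow> kupisch K \<and> sorted K"

text \<open>P(omega) = [length K - K!(length K - 1), length K - 1].\<close>
definition omega_char :: "nat list \<Rightarrow> nat list" where
  "omega_char K = charm K (length K - K ! (length K - 1)) (length K - 1)"

definition ascent :: "nat list \<Rightarrow> nat list" where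
  "ascent z = (THE K. ascending K \<and> omega_char K = z)"

text \<open>d-closed simple S_i: torsionless (socle of an indecomposable projective) or
  the socle of an (indecomposable) module of projective dimension \<ge> d.\<close>
definition torsionless :: "nat list \<Rightarrow> nat \<Rightarrow> bool" where
  "torsionless K i \<longleftrightarrow> (\<exists>b. isproj K i b)"

definition dclosed :: "nat list \<Rightarrow> nat \<Rightarrow> nat \<Rightarrow> bool" where
  "dclosed K d i \<longleftrightarrow> torsionless K i \<or> (\<exists>b. ismod K i b \<and> d \<le> pd K i b)"

text \<open>Length of the largest submodule U of P(omega) all of whose composition
  factors are d-closed (submodules of P(omega) = [s, n-1] are [s, s+m-1]).\<close>
definition ulen :: "nat list \<Rightarrow> nat \<Rightarrow> nat" where
  "ulen K d = (GREATEST m. m \<le> K ! (length K - 1) \<and>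
       (\<forall>i<m. dclosed K d (length K - K ! (length K - 1) + i)))"

text \<open>Length of the d-cliff module Y = P(omega)/U.\<close>
definition cliff_len :: "nat list \<Rightarrow> nat \<Rightarrow> nat" where
  "cliff_len K d = K ! (length K - 1) - ulen K d"

text \<open>One-point extension E_d: new vertex T with rad P(T) = Y, so |P(T)| = |Y| + 1.\<close>
definition Ed :: "nat \<Rightarrow> nat list \<Rightarrow> nat list" where
  "Ed d K = (if cliff_len K d = 0 then K else K @ [cliff_len K d + 1])"

definition Cd :: "nat \<Rightarrow> nat list \<Rightarrow> nat list" where
  "Cd d K = (Ed d ^^ (LEAST t. cliff_len ((Ed d ^^ t) K) d = 0)) K"

definition Hd :: "nat \<Rightarrow> nat list \<Rightarrow> nat list" where
  "Hd d cs = Cd d (ascent (0 # cs @ [1]))"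

end

theory Submission
  imports Defs
begin

declare pd.simps[simp del]

lemma kup_le: "kupisch K \<Longrightarrow> i < length K \<Longrightarrow> 1 \<le> K!i \<and> K!i \<le> Suc i"
proof (induction i)
  case 0 then show ?case by (simp add: kupisch_def)
next
  case (Suc i)
  then have "2 \<le> K!Suc i \<and> K!Suc i \<le> K!i + 1" unfolding kupisch_def by (metis diff_Suc_1 zero_less_Suc)
  with Suc show ?case by auto
qed

lemma kup_step: "kupisch K \<Longrightarrow> Suc i < length K \<Longrightarrow> 2 \<le> K!Suc i \<and> K!Suc i \<le> K!i + 1"
  unfolding kupisch_def by (metis diff_Suc_1 zero_less_Suc)

lemma F_mono: "kupisch K \<Longrightarrow> i \<le> j \<Longrightarrow> j < length K \<Longrightarrow> Suc i - K!i \<le> Suc j - K!j"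
proof (induction j)
  case 0 then show ?case by simp
next
  case (Suc j)
  show ?case
  proof (cases "i = Suc j")
    case True then show ?thesis by simp
  next
    case False
    then have "Suc i - K!i \<le> Suc j - K!j" using Suc by auto
    moreover have "K!Suc j \<le> K!j + 1" using kup_step[OF Suc.prems(1)] Suc.prems by auto
    moreover have "K!j \<le> Suc j" using kup_le[OF Suc.prems(1)] Suc.prems by auto
    ultimately show ?thesis by linarith
  qed
qed

lemma ismod_app: "b < length K \<Longrightarrow> ismod (K @ X) a b = ismod K a b"
  by (auto simp: ismod_def nth_append)

lemma pd_app: "b < length K \<Longrightarrow> pd (K @ X) a b = pd K a b"
proof (induction b arbitrary: a rule: less_induct)
  case (less b)
  show ?case
  proof (cases "\<not> ismod K a b \<or> a = 0 \<or> b + 1 - a = K ! b")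
    case True
    then show ?thesis using less.prems by (subst (1 2) pd.simps) (simp add: ismod_app nth_append)
  next
    case False
    then have "a - 1 < b" by (auto simp: ismod_def)
    then have "pd (K @ X) (b + 1 - K ! b) (a - 1) = pd K (b + 1 - K ! b) (a - 1)"
      using less by auto
    then show ?thesis using less.prems False
      by (subst (1 2) pd.simps) (simp add: ismod_app nth_append)
  qed
qed

lemma pd_proj: "ismod K a b \<Longrightarrow> b + 1 - a = K!b \<Longrightarrow> pd K a b = 0"
  by (subst pd.simps) simp

lemma pd_step: "ismod K a b \<Longrightarrow> a \<noteq> 0 \<Longrightarrow> b + 1 - a \<noteq> K!b \<Longrightarrow>
   pd K a b = Suc (pd K (b + 1 - K ! b) (a - 1))"
  by (subst pd.simps) simp

lemma shift:
  assumes "a \<le> b" "b < length K" "b + 1 - a < l" "K!b = l" "K!(a-1) = l" "l \<le> a"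
  shows "pd K a b = Suc (Suc (pd K (a-l) (b-l)))"
proof -
  have m1: "ismod K a b" using assms by (auto simp: ismod_def)
  have "pd K a b = Suc (pd K (b + 1 - l) (a - 1))"
    using pd_step[OF m1] assms by auto
  also have "pd K (b + 1 - l) (a - 1) = Suc (pd K (a - 1 + 1 - l) (b + 1 - l - 1))"
  proof -
    have m2: "ismod K (b + 1 - l) (a - 1)" using assms by (auto simp: ismod_def)
    show ?thesis using pd_step[OF m2] assms by auto
  qed
  also have "a - 1 + 1 - l = a - l" using assms by auto
  also have "b + 1 - l - 1 = b - l" using assms by auto
  finally show ?thesis .
qed


definition winv :: "nat list \<Rightarrow> nat list \<Rightarrow> bool" where
 "winv B cs \<longleftrightarrow> ascending B \<and> B!(length B - 1) = length cs + 1 \<and> length cs + 1 \<le> length B \<and>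
   (\<forall>i j. 1 \<le> i \<longrightarrow> i < j \<longrightarrow> j \<le> length cs + 1 \<longrightarrow>
      pd B (length B - (length cs + 1) + i) (length B - (length cs + 1) + j - 1) = cs!(i-1)) \<and>
   (\<forall>j. 1 \<le> j \<longrightarrow> j \<le> length cs \<longrightarrow>
      pd B (length B - (length cs + 1)) (length B - (length cs + 1) + j - 1) = cs!(j-1) - 1)"

lemma sorted_last_max: "sorted B \<Longrightarrow> i < length B \<Longrightarrow> B!i \<le> B!(length B - 1)"
  by (rule sorted_nth_mono) auto

lemma inv_delta0:
  assumes winv: "winv B cs" and odd: "\<forall>c\<in>set cs. odd c"
  shows "winv (B @ [length cs + 2]) (cs @ [1])"
proof -
  define n where "n = length B"
  define l where "l = length cs + 1"
  define s where "s = n - l"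
  have l1: "1 \<le> l" by (simp add: l_def)
  have asc: "ascending B" and lastB: "B!(n-1) = l" and ln: "l \<le> n"
    using winv unfolding winv_def n_def l_def by auto
  have T1: "\<And>i j. 1 \<le> i \<Longrightarrow> i < j \<Longrightarrow> j \<le> l \<Longrightarrow> pd B (s + i) (s + j - 1) = cs!(i-1)"
    using winv unfolding winv_def n_def l_def s_def by auto
  have T2: "\<And>j. 1 \<le> j \<Longrightarrow> j \<le> length cs \<Longrightarrow> pd B s (s + j - 1) = cs!(j-1) - 1"
    using winv unfolding winv_def n_def l_def s_def by auto
  have kB: "kupisch B" and sB: "sorted B" using asc by (auto simp: ascending_def)
  have n1: "1 \<le> n" using kB by (cases B) (auto simp: kupisch_def n_def)
  define B' where "B' = B @ [length cs + 2]"
  have lB': "length B' = n + 1" by (simp add: B'_def n_def)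
  have nthB': "\<And>i. i < n \<Longrightarrow> B'!i = B!i" by (simp add: B'_def n_def nth_append)
  have nthB'n: "B'!n = l + 1" by (simp add: B'_def n_def nth_append l_def)
  have kB': "kupisch B'"
    unfolding kupisch_def
  proof (intro conjI)
    show "B' \<noteq> []" by (simp add: B'_def)
    show "B'!0 = 1" using n1 kB nthB' by (simp add: kupisch_def)
    show "\<forall>i. 0 < i \<and> i < length B' \<longrightarrow> 2 \<le> B'!i \<and> B'!i \<le> B'!(i-1) + 1"
    proof (intro allI impI)
    fix i assume i: "0 < i \<and> i < length B'"
    show "2 \<le> B'!i \<and> B'!i \<le> B'!(i-1) + 1"
    proof (cases "i = n")
      case True then show ?thesis using nthB'n nthB' lastB n1 by (auto simp: l_def)
    next
      case False
      then have "i < n" using i lB' by auto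
      then show ?thesis using kB i nthB' unfolding kupisch_def n_def by auto
    qed
    qed
  qed
  have sB': "sorted B'"
  proof -
    have "\<And>i. i < n \<Longrightarrow> B!i \<le> length cs + 2" using sorted_last_max[OF sB] lastB by (fastforce simp: n_def l_def)
    then show ?thesis unfolding B'_def using sB by (auto simp: sorted_append in_set_conv_nth n_def)
  qed
  have s': "length B' - (length (cs@[1]) + 1) = s" using lB' by (simp add: s_def l_def)
  show ?thesis
    unfolding winv_def B'_def[symmetric] s'
  proof (intro conjI allI impI)
    show "ascending B'" using kB' sB' by (simp add: ascending_def)
    show "B'!(length B' - 1) = length (cs@[1]) + 1" using lB' nthB'n by (simp add: l_def)
    show "length (cs@[1]) + 1 \<le> length B'" using lB' ln by (simp add: l_def)
  next
    fix i j assume ij: "1 \<le> i" "i < j" "j \<le> length (cs@[1]) + 1"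
    show "pd B' (s + i) (s + j - 1) = (cs@[1])!(i-1)"
    proof (cases "j \<le> l")
      case True
      then have "s + j - 1 < n" using ln ij by (auto simp: s_def)
      then have "pd B' (s + i) (s + j - 1) = pd B (s + i) (s + j - 1)"
        by (simp add: B'_def pd_app n_def)
      also have "\<dots> = cs!(i-1)" using T1 ij True by auto
      also have "\<dots> = (cs@[1])!(i-1)" using ij True by (auto simp: nth_append l_def)
      finally show ?thesis .
    next
      case False
      then have j: "j = l + 1" using ij by (auto simp: l_def)
      have e: "s + j - 1 = n" using j ln by (auto simp: s_def)
      have m: "ismod B' (s+i) n" using lB' nthB'n ij j ln by (auto simp: ismod_def s_def)
      have "pd B' (s + i) n = Suc (pd B' (n + 1 - B'!n) (s + i - 1))"
        by (rule pd_step[OF m]) (use ij ln nthB'n in \<open>auto simp: s_def\<close>)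
      also have "n + 1 - B'!n = s" using nthB'n ln by (simp add: s_def)
      also have "pd B' s (s + i - 1) = pd B s (s + i - 1)"
      proof -
        have "s + i - 1 < length B" using ij j ln by (auto simp: s_def n_def)
        then show ?thesis by (simp add: B'_def pd_app)
      qed
      finally have P: "pd B' (s + i) n = Suc (pd B s (s + i - 1))" .
      show ?thesis
      proof (cases "i \<le> length cs")
        case True
        have "odd (cs!(i-1))" using odd True ij by auto
        then have "cs!(i-1) \<ge> 1" by (cases "cs!(i-1)") auto
        then show ?thesis using P T2[of i] True ij e by (auto simp: nth_append)
      next
        case False
        then have i: "i = l" using ij j by (auto simp: l_def)
        have "ismod B s (n-1)" using lastB ln n1 l1 by (auto simp: ismod_def s_def n_def)
        then have "pd B s (s + i - 1) = 0" using pd_proj[of B s "n-1"] i lastB ln n1 by (auto simp: s_def)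
        then show ?thesis using P e i by (auto simp: nth_append l_def)
      qed
    qed
  next
    fix j assume j: "1 \<le> j" "j \<le> length (cs@[1])"
    have "s + j - 1 < n" using j ln by (auto simp: s_def l_def)
    then have "pd B' s (s + j - 1) = pd B s (s + j - 1)" by (simp add: B'_def pd_app n_def)
    also have "\<dots> = (cs@[1])!(j-1) - 1"
    proof (cases "j \<le> length cs")
      case True then show ?thesis using T2 j by (auto simp: nth_append)
    next
      case False
      then have jj: "j = l" using j by (auto simp: l_def)
      have "ismod B s (n-1)" using lastB ln n1 l1 by (auto simp: ismod_def s_def n_def)
      then have "pd B s (n-1) = 0" using pd_proj[of B s "n-1"] lastB ln n1 by (auto simp: s_def)
      then show ?thesis using jj ln n1 by (auto simp: nth_append l_def s_def)
    qed
    finally show "pd B' s (s + j - 1) = (cs@[1])!(j-1) - 1" .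
  qed
qed


lemma winv_run:
  assumes inv: "winv B (map (\<lambda>c. c - 2) cs)" and ge: "\<forall>c\<in>set cs. 3 \<le> c" and ne: "cs \<noteq> []"
  shows "winv (B @ replicate (length cs + 1) (length cs + 1)) cs"
proof -
  define n where "n = length B"
  define l where "l = length cs + 1"
  define s where "s = n - l"
  have l2: "2 \<le> l" using ne by (cases cs) (auto simp: l_def)
  have asc: "ascending B" and lastB: "B!(n-1) = l" and ln: "l \<le> n"
    using inv unfolding winv_def n_def l_def by auto
  have T1: "\<And>i j. 1 \<le> i \<Longrightarrow> i < j \<Longrightarrow> j \<le> l \<Longrightarrow> pd B (s + i) (s + j - 1) = cs!(i-1) - 2"
    using inv unfolding winv_def n_def l_def s_def by auto
  have T2: "\<And>j. 1 \<le> j \<Longrightarrow> j \<le> length cs \<Longrightarrow> pd B s (s + j - 1) = cs!(j-1) - 2 - 1"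
    using inv unfolding winv_def n_def l_def s_def by auto
  have kB: "kupisch B" and sB: "sorted B" using asc by (auto simp: ascending_def)
  have n1: "1 \<le> n" using kB by (cases B) (auto simp: kupisch_def n_def)
  define B' where "B' = B @ replicate (length cs + 1) (length cs + 1)"
  have lB': "length B' = n + l" by (simp add: B'_def n_def l_def)
  have nthB': "\<And>i. i < n \<Longrightarrow> B'!i = B!i" by (simp add: B'_def n_def nth_append)
  have nthB'2: "\<And>i. n \<le> i \<Longrightarrow> i < n + l \<Longrightarrow> B'!i = l" unfolding B'_def n_def l_def by (subst nth_append) (simp del: replicate.simps)
  have nthB'3: "\<And>i. n - 1 \<le> i \<Longrightarrow> i < n + l \<Longrightarrow> B'!i = l"
    using nthB'2 nthB' lastB n1 by (metis diff_le_self le_antisym not_le_imp_less diff_Suc_less le_neq_implies_less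
        less_one nat_less_le One_nat_def Suc_pred' Suc_le_eq)
  have kB': "kupisch B'"
    unfolding kupisch_def
  proof (intro conjI)
    show "B' \<noteq> []" by (simp add: B'_def)
    show "B'!0 = 1" using n1 kB nthB' by (simp add: kupisch_def)
    show "\<forall>i. 0 < i \<and> i < length B' \<longrightarrow> 2 \<le> B'!i \<and> B'!i \<le> B'!(i-1) + 1"
    proof (intro allI impI)
      fix i assume i: "0 < i \<and> i < length B'"
      show "2 \<le> B'!i \<and> B'!i \<le> B'!(i-1) + 1"
      proof (cases "n \<le> i")
        case True then show ?thesis using nthB'3[of i] nthB'3[of "i-1"] i lB' l2 by auto
      next
        case False
        then have "i < n" by auto
        then show ?thesis using kB i nthB' unfolding kupisch_def n_def by auto
      qed
    qed
  qed
  have sB': "sorted B'"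
  proof -
    have "\<And>i. i < n \<Longrightarrow> B!i \<le> length cs + 1" using sorted_last_max[OF sB] lastB by (fastforce simp: n_def l_def)
    then show ?thesis unfolding B'_def using sB by (auto simp: sorted_append in_set_conv_nth n_def)
  qed
  have s': "length B' - (length cs + 1) = n" using lB' by (simp add: l_def)
  have cs3: "\<And>i. i < length cs \<Longrightarrow> 3 \<le> cs!i" using ge by auto
  show ?thesis
    unfolding winv_def B'_def[symmetric] s'
  proof (intro conjI allI impI)
    show "ascending B'" using kB' sB' by (simp add: ascending_def)
    show "B'!(length B' - 1) = length cs + 1" using lB' nthB'2[of "n + l - 1"] l2 by (simp add: l_def)
    show "length cs + 1 \<le> length B'" using lB' by (simp add: l_def)
  next
    fix i j assume ij: "1 \<le> i" "i < j" "j \<le> length cs + 1"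
    have "pd B' (n + i) (n + j - 1) = Suc (Suc (pd B' (n + i - l) (n + j - 1 - l)))"
      by (rule shift) (use ij ln l2 lB' nthB'3 in \<open>auto simp: l_def\<close>)
    also have "n + i - l = s + i \<and> n + j - 1 - l = s + j - 1" using ln ij by (auto simp: s_def l_def)
    then have "Suc (Suc (pd B' (n + i - l) (n + j - 1 - l))) = Suc (Suc (pd B' (s + i) (s + j - 1)))" by simp
    also have "pd B' (s + i) (s + j - 1) = pd B (s + i) (s + j - 1)"
    proof -
      have "s + j - 1 < length B" using ij ln by (auto simp: s_def n_def l_def)
      then show ?thesis by (simp add: B'_def pd_app)
    qed
    also have "\<dots> = cs!(i-1) - 2" using T1 ij by (auto simp: l_def)
    finally have X: "pd B' (n + i) (n + j - 1) = cs!(i-1) - 2 + 2" by simp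
    have "3 \<le> cs!(i-1)" using cs3[of "i-1"] ij by auto
    then show "pd B' (n + i) (n + j - 1) = cs!(i-1)" using X by simp
  next
    fix j assume j: "1 \<le> j" "j \<le> length cs"
    have "pd B' n (n + j - 1) = Suc (Suc (pd B' (n - l) (n + j - 1 - l)))"
      by (rule shift) (use j ln l2 lB' nthB'3 n1 in \<open>auto simp: l_def\<close>)
    also have "n - l = s \<and> n + j - 1 - l = s + j - 1" using ln j by (auto simp: s_def l_def)
    then have "Suc (Suc (pd B' (n - l) (n + j - 1 - l))) = Suc (Suc (pd B' s (s + j - 1)))" by simp
    also have "pd B' s (s + j - 1) = pd B s (s + j - 1)"
    proof -
      have "s + j - 1 < length B" using j ln by (auto simp: s_def n_def l_def)
      then show ?thesis by (simp add: B'_def pd_app)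
    qed
    also have "\<dots> = cs!(j-1) - 2 - 1" using T2 j by auto
    finally have X: "pd B' n (n + j - 1) = cs!(j-1) - 2 - 1 + 2" by simp
    have "3 \<le> cs!(j-1)" using cs3[of "j-1"] j by auto
    then show "pd B' n (n + j - 1) = cs!(j-1) - 1" using X by simp
  qed
qed


lemma winv_nil: "winv [1] []"
  by (auto simp: winv_def ascending_def kupisch_def)

lemma sum_map_minus2: "cs \<noteq> [] \<Longrightarrow> \<forall>c\<in>set cs. 3 \<le> c \<Longrightarrow> sum_list (map (\<lambda>c. c - 2) cs) < sum_list (cs::nat list)"
proof (induction cs)
  case Nil then show ?case by simp
next
  case (Cons a cs)
  then show ?case by (cases "cs = []") auto
qed

lemma sum_map_minus2_le: "sum_list (map (\<lambda>c. c - 2) cs) \<le> sum_list (cs::nat list)"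
  by (induction cs) auto

lemma winv_exists: "\<forall>c\<in>set cs. odd c \<Longrightarrow> sorted (rev cs) \<Longrightarrow> \<exists>B. winv B cs"
proof (induction "sum_list cs" arbitrary: cs rule: less_induct)
  case less
  show ?case
  proof (cases cs rule: rev_cases)
    case Nil then show ?thesis using winv_nil by auto
  next
    case (snoc cs' x)
    show ?thesis
    proof (cases "x = 1")
      case True
      have o: "\<forall>c\<in>set cs'. odd c" using less.prems snoc by auto
      have so: "sorted (rev cs')" using less.prems snoc by auto
      have "sum_list cs' < sum_list cs" using snoc True by simp
      then obtain B where "winv B cs'" using less.hyps o so by blast
      then have "winv (B @ [length cs' + 2]) (cs' @ [1])" using inv_delta0 o by blast
      then show ?thesis using snoc True by blast
    next
      case False
      have ox: "odd x" using less.prems snoc by auto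
      then have x3: "3 \<le> x" using False by presburger
      have ge: "\<forall>c\<in>set cs. 3 \<le> c"
      proof
        fix c assume c: "c \<in> set cs"
        have "sorted (x # rev cs')" using less.prems snoc by simp
        then have "\<forall>c\<in>set cs'. x \<le> c" by simp
        then show "3 \<le> c" using c snoc x3 by auto
      qed
      define cs2 where "cs2 = map (\<lambda>c. c - 2) cs"
      have o2: "\<forall>c\<in>set cs2. odd c"
      proof
        fix c assume "c \<in> set cs2"
        then obtain c0 where c0: "c0 \<in> set cs" "c = c0 - 2" by (auto simp: cs2_def)
        have "odd c0" "3 \<le> c0" using c0 less.prems ge by auto
        then show "odd c" using c0 by presburger
      qed
      have so2: "sorted (rev cs2)"
      proof -
        have "sorted (rev cs)" using less.prems by simp
        then have "sorted (map (\<lambda>c. c - 2) (rev cs))"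
          by (simp add: sorted_map sorted_wrt_mono_rel[of _ "(\<le>)"] diff_le_mono)
        then show ?thesis by (simp add: cs2_def rev_map)
      qed
      have "sum_list cs2 < sum_list cs" unfolding cs2_def using sum_map_minus2[of cs] ge snoc by blast
      then obtain B where "winv B cs2" using less.hyps o2 so2 by blast
      then have "winv (B @ replicate (length cs + 1) (length cs + 1)) cs"
        using winv_run ge snoc unfolding cs2_def by blast
      then show ?thesis by blast
    qed
  qed
qed


definition oddp :: "nat \<Rightarrow> nat" where "oddp x = (if odd x then x else 0)"

lemma oddp_pre: "oddp (Suc (Suc x)) = oddp (Suc (Suc y)) \<Longrightarrow> oddp x = oddp y"
  by (auto simp: oddp_def split: if_splits)

lemma oddp_ne1: "oddp (Suc (Suc x)) \<noteq> 1"
  by (auto simp: oddp_def)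

lemma kup_2: "kupisch K \<Longrightarrow> 0 < i \<Longrightarrow> i < length K \<Longrightarrow> 2 \<le> K!i"
  unfolding kupisch_def by blast

lemma kup_len: "kupisch K \<Longrightarrow> K!(length K - 1) \<le> length K"
  using kup_le[of K "length K - 1"] by (cases K) (auto simp: kupisch_def)

lemma kup_ne: "kupisch K \<Longrightarrow> 1 \<le> length K"
  by (cases K) (auto simp: kupisch_def)

lemma oc_eq: assumes k: "kupisch K"
  shows "omega_char K = map (\<lambda>i. oddp (pd K i i)) [length K - K!(length K - 1)..<length K]"
proof -
  define n where "n = length K"
  define m where "m = K!(n-1)"
  have n1: "1 \<le> n" using kup_ne[OF k] by (simp add: n_def)
  have mn: "m \<le> n" "1 \<le> m" using kup_len[OF k] kup_le[OF k, of "n-1"] n1 by (auto simp: n_def m_def)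
  have "ismod K (n - m) (n-1)" using mn n1 by (auto simp: ismod_def n_def m_def)
  then have p0: "pd K (n - m) (n - 1) = 0" using pd_proj mn n1 by (auto simp: m_def)
  have "[n - m..<Suc (n - 1)] = [n-m..<n]" using n1 by simp
  then show ?thesis unfolding omega_char_def charm_def n_def[symmetric] m_def[symmetric] p0
    by (simp add: oddp_def)
qed

lemma len_oc: "kupisch K \<Longrightarrow> length (omega_char K) = K!(length K - 1)"
  using oc_eq[of K] kup_len[of K] by simp

lemma asc_butlast: assumes a: "ascending K" and l: "2 \<le> length K" shows "ascending (butlast K)"
proof -
  have k: "kupisch K" and s: "sorted K" using a by (auto simp: ascending_def)
  have e: "K = butlast K @ [last K]" using l by (cases K rule: rev_cases) auto
  have "sorted (butlast K)" using s e by (metis sorted_append)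
  moreover have "butlast K \<noteq> []" using l by (cases K rule: rev_cases) auto
  then have "kupisch (butlast K)"
    using k l unfolding kupisch_def by (auto simp: nth_butlast)
  ultimately show ?thesis by (simp add: ascending_def)
qed

lemma oc_up:
  assumes a: "ascending K" and l: "2 \<le> length K" and up: "K!(length K - 1) = K!(length K - 2) + 1"
  shows "omega_char K = omega_char (butlast K) @ [1]"
proof -
  define n where "n = length K"
  define m where "m = K!(n-1)"
  have k: "kupisch K" using a by (simp add: ascending_def)
  have kb: "kupisch (butlast K)" using asc_butlast[OF a l] by (simp add: ascending_def)
  have e: "K = butlast K @ [last K]" using l by (cases K rule: rev_cases) auto
  have lb: "length (butlast K) = n - 1" by (simp add: n_def)
  have nb: "butlast K ! (n - 1 - 1) = m - 1" using up l by (simp add: nth_butlast n_def m_def numeral_2_eq_2)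
  have m2: "2 \<le> m" using kup_2[OF k, of "n-1"] l by (simp add: n_def m_def)
  have mn: "m \<le> n" using kup_len[OF k] by (simp add: n_def m_def)
  have pdb: "\<And>i. i < n - 1 \<Longrightarrow> pd (butlast K) i i = pd K i i"
    using pd_app[of _ "butlast K" "[last K]"] e lb by (metis)
  have up': "K!(n-2) = m - 1" using up by (simp add: n_def m_def)
  have "pd K (n-1) (n-1) = Suc (pd K (n - 1 + 1 - K!(n-1)) (n - 1 - 1))"
    by (rule pd_step) (use l m2 mn in \<open>auto simp: ismod_def n_def m_def\<close>)
  moreover have "n - 1 + 1 - K!(n-1) = n - m" using l by (simp add: m_def n_def)
  moreover have "n - 1 - 1 = n - 2" by simp
  moreover have "pd K (n-m) (n-2) = 0"
    by (rule pd_proj) (use l m2 mn up' in \<open>auto simp: ismod_def n_def\<close>)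
  ultimately have p1: "pd K (n-1) (n-1) = 1" by simp
  have "omega_char K = map (\<lambda>i. oddp (pd K i i)) [n - m..<n]"
    using oc_eq[OF k] by (simp add: n_def m_def)
  also have "[n - m..<n] = [n-m..<n-1] @ [n-1]"
  proof -
    have "n = Suc (n-1)" "n - m \<le> n - 1" using l m2 by (auto simp: n_def)
    then show ?thesis using upt_Suc_append[of "n-m" "n-1"] by simp
  qed
  also have "map (\<lambda>i. oddp (pd K i i)) ([n-m..<n-1] @ [n-1]) = map (\<lambda>i. oddp (pd (butlast K) i i)) [n-m..<n-1] @ [1]"
    using pdb p1 by (auto simp: oddp_def)
  also have "map (\<lambda>i. oddp (pd (butlast K) i i)) [n-m..<n-1] = omega_char (butlast K)"
  proof -
    have "length (butlast K) - butlast K ! (length (butlast K) - 1) = n - m" using lb nb m2 mn by simp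
    then show ?thesis using oc_eq[OF kb] lb by simp
  qed
  finally show ?thesis .
qed


lemma oc_same:
  assumes a: "ascending K" and l: "2 \<le> length K" and sm: "K!(length K - 1) = K!(length K - 2)"
  shows "\<exists>x. omega_char (butlast K) = oddp x # butlast (omega_char K) \<and> last (omega_char K) = oddp (Suc (Suc x))"
proof -
  define n where "n = length K"
  define m where "m = K!(n-1)"
  have k: "kupisch K" using a by (simp add: ascending_def)
  have kb: "kupisch (butlast K)" using asc_butlast[OF a l] by (simp add: ascending_def)
  have e: "K = butlast K @ [last K]" using l by (cases K rule: rev_cases) auto
  have lb: "length (butlast K) = n - 1" by (simp add: n_def)
  have sm': "K!(n-2) = m" using sm by (simp add: n_def m_def)
  have n3: "3 \<le> n"
  proof (rule ccontr)
    assume "\<not> 3 \<le> n"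
    then have "n = 2" using l by (simp add: n_def)
    then show False using sm' kup_2[OF k, of 1] k by (auto simp: kupisch_def n_def m_def)
  qed
  have nb: "butlast K ! (n - 1 - 1) = m" using sm' n3 by (simp add: nth_butlast n_def numeral_2_eq_2)
  have m2: "2 \<le> m" using kup_2[OF k, of "n-1"] l by (simp add: n_def m_def)
  have "K!(n-2) \<le> Suc (n-2)" using kup_le[OF k, of "n-2"] n3 by (auto simp: n_def)
  then have mn: "m \<le> n - 1" using sm' n3 by linarith
  have pdb: "\<And>i. i < n - 1 \<Longrightarrow> pd (butlast K) i i = pd K i i"
    using pd_app[of _ "butlast K" "[last K]"] e lb by (metis)
  have p1: "pd K (n-1) (n-1) = Suc (Suc (pd K (n - 1 - m) (n - 1 - m)))"
    by (rule shift) (use l m2 mn sm' n3 in \<open>auto simp: n_def m_def numeral_2_eq_2\<close>)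
  have L1: "omega_char K = map (\<lambda>i. oddp (pd K i i)) [n - m..<n]"
    using oc_eq[OF k] by (simp add: n_def m_def)
  have "length (butlast K) - butlast K ! (length (butlast K) - 1) = n - 1 - m" using lb nb by simp
  then have L2: "omega_char (butlast K) = map (\<lambda>i. oddp (pd (butlast K) i i)) [n - 1 - m..<n - 1]"
    using oc_eq[OF kb] lb by simp
  have u1: "[n - m..<n] = [n - m..<n - 1] @ [n - 1]"
  proof -
    have "n = Suc (n-1)" "n - m \<le> n - 1" using l m2 by (auto simp: n_def)
    then show ?thesis using upt_Suc_append[of "n-m" "n-1"] by simp
  qed
  have u2: "[n - 1 - m..<n - 1] = (n - 1 - m) # [n - m..<n - 1]"
    using m2 mn by (simp add: upt_conv_Cons Suc_diff_Suc)
  have "omega_char (butlast K) = oddp (pd K (n-1-m) (n-1-m)) # butlast (omega_char K)"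
    unfolding L1 L2 u1 u2 using pdb m2 mn by simp
  moreover have "last (omega_char K) = oddp (Suc (Suc (pd K (n-1-m) (n-1-m))))"
    unfolding L1 u1 using p1 by simp
  ultimately show ?thesis by blast
qed

lemma asc_inj: "ascending K \<Longrightarrow> ascending L \<Longrightarrow> omega_char K = omega_char L \<Longrightarrow> K = L"
proof (induction "length K" arbitrary: K L rule: less_induct)
  case less
  have kK: "kupisch K" and kL: "kupisch L" using less.prems by (auto simp: ascending_def)
  define z where "z = omega_char K"
  have lzK: "length z = K!(length K - 1)" using len_oc[OF kK] by (simp add: z_def)
  have lzL: "length z = L!(length L - 1)" using len_oc[OF kL] less.prems by (simp add: z_def)
  have one: "\<And>M. kupisch M \<Longrightarrow> length M = 1 \<longleftrightarrow> M!(length M - 1) = 1"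
  proof -
    fix M :: "nat list" assume kM: "kupisch M"
    show "length M = 1 \<longleftrightarrow> M!(length M - 1) = 1"
    proof
      assume "length M = 1" then show "M!(length M - 1) = 1" using kM by (simp add: kupisch_def)
    next
      assume h: "M!(length M - 1) = 1"
      show "length M = 1"
      proof (rule ccontr)
        assume "length M \<noteq> 1"
        then have "2 \<le> length M" using kup_ne[OF kM] by simp
        then have "0 < length M - 1" "length M - 1 < length M" by auto
        then show False using kup_2[OF kM, of "length M - 1"] h by auto
      qed
    qed
  qed
  have lastK: "K = butlast K @ [K!(length K - 1)]"
    using kup_ne[OF kK] by (cases K rule: rev_cases) (auto simp: nth_append)
  have lastL: "L = butlast L @ [L!(length L - 1)]"
    using kup_ne[OF kL] by (cases L rule: rev_cases) (auto simp: nth_append)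
  show ?case
  proof (cases "length K = 1")
    case True
    then have "length L = 1" using one[OF kK] one[OF kL] lzK lzL by simp
    have "K = [1]" using True kK by (cases K) (auto simp: kupisch_def)
    moreover have "L = [1]" using \<open>length L = 1\<close> kL by (cases L) (auto simp: kupisch_def)
    ultimately show ?thesis by simp
  next
    case False
    then have lK: "2 \<le> length K" using kup_ne[OF kK] by simp
    have lL: "2 \<le> length L" using False one[OF kK] one[OF kL] lzK lzL kup_ne[OF kL] by simp
    have cK: "K!(length K - 1) = K!(length K - 2) + 1 \<or> K!(length K - 1) = K!(length K - 2)"
    proof -
      have "K!(length K - 1) \<le> K!(length K - 2) + 1" using kup_step[OF kK, of "length K - 2"] lK
        by (simp add: Suc_diff_Suc numeral_2_eq_2)
      moreover have "K!(length K - 2) \<le> K!(length K - 1)"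
        using less.prems(1) lK by (intro sorted_nth_mono) (auto simp: ascending_def)
      ultimately show ?thesis by linarith
    qed
    have cL: "L!(length L - 1) = L!(length L - 2) + 1 \<or> L!(length L - 1) = L!(length L - 2)"
    proof -
      have "L!(length L - 1) \<le> L!(length L - 2) + 1" using kup_step[OF kL, of "length L - 2"] lL
        by (simp add: Suc_diff_Suc numeral_2_eq_2)
      moreover have "L!(length L - 2) \<le> L!(length L - 1)"
        using less.prems(2) lL by (intro sorted_nth_mono) (auto simp: ascending_def)
      ultimately show ?thesis by linarith
    qed
    have bK: "ascending (butlast K)" using asc_butlast less.prems lK by blast
    have bL: "ascending (butlast L)" using asc_butlast less.prems lL by blast
    have lt: "length (butlast K) < length K" using lK by simp
    have "butlast K = butlast L"
    proof (cases "last z = 1")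
      case True
      have uK: "K!(length K - 1) = K!(length K - 2) + 1"
      proof (rule ccontr)
        assume "\<not> ?thesis"
        then obtain x where "last z = oddp (Suc (Suc x))" using oc_same[OF less.prems(1) lK] cK z_def by auto
        then show False using True oddp_ne1[of x] by simp
      qed
      have uL: "L!(length L - 1) = L!(length L - 2) + 1"
      proof (rule ccontr)
        assume "\<not> ?thesis"
        then obtain x where "last z = oddp (Suc (Suc x))" using oc_same[OF less.prems(2) lL] cL z_def less.prems(3) by auto
        then show False using True oddp_ne1[of x] by simp
      qed
      have "omega_char (butlast K) = omega_char (butlast L)"
        using oc_up[OF less.prems(1) lK uK] oc_up[OF less.prems(2) lL uL] less.prems(3) by simp
      then show ?thesis using less.hyps[OF lt bK bL] by blast
    next
      case False
      have sK: "K!(length K - 1) = K!(length K - 2)"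
      proof (rule ccontr)
        assume "\<not> ?thesis"
        then have "z = omega_char (butlast K) @ [1]" using cK oc_up[OF less.prems(1) lK] z_def by simp
        then show False using False by simp
      qed
      have sL: "L!(length L - 1) = L!(length L - 2)"
      proof (rule ccontr)
        assume "\<not> ?thesis"
        then have "z = omega_char (butlast L) @ [1]" using cL oc_up[OF less.prems(2) lL] z_def less.prems(3) by simp
        then show False using False by simp
      qed
      obtain x where x: "omega_char (butlast K) = oddp x # butlast z" "last z = oddp (Suc (Suc x))"
        using oc_same[OF less.prems(1) lK sK] z_def by auto
      obtain y where y: "omega_char (butlast L) = oddp y # butlast z" "last z = oddp (Suc (Suc y))"
        using oc_same[OF less.prems(2) lL sL] z_def less.prems(3) by auto
      have "oddp (Suc (Suc x)) = oddp (Suc (Suc y))" using x(2) y(2) by simp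
      then have "oddp x = oddp y" by (rule oddp_pre)
      then have "omega_char (butlast K) = omega_char (butlast L)" using x y by simp
      then show ?thesis using less.hyps[OF lt bK bL] by blast
    qed
    moreover have "K!(length K - 1) = L!(length L - 1)" using lzK lzL by simp
    ultimately show ?thesis by (subst lastK, subst lastL) simp
  qed
qed


lemma winv_T1: "winv B cs \<Longrightarrow> s = length B - (length cs + 1) \<Longrightarrow> 1 \<le> i \<Longrightarrow> i < j \<Longrightarrow> j \<le> length cs + 1 \<Longrightarrow>
   pd B (s + i) (s + j - 1) = cs!(i-1)"
  unfolding winv_def by blast

lemma winv_T2: "winv B cs \<Longrightarrow> s = length B - (length cs + 1) \<Longrightarrow> 1 \<le> j \<Longrightarrow> j \<le> length cs \<Longrightarrow>
   pd B s (s + j - 1) = cs!(j-1) - 1"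
  unfolding winv_def by blast

lemma charm_app: "b < length K \<Longrightarrow> charm (K @ X) a b = charm K a b"
  unfolding charm_def by (auto simp: pd_app)

lemma socle_dclosed: assumes k: "kupisch K"
  shows "dclosed K d (length K - K!(length K - 1))"
proof -
  have "isproj K (length K - K!(length K - 1)) (length K - 1)"
  proof -
    have "1 \<le> K!(length K - 1)" using kup_ne[OF k] kup_le[OF k, of "length K - 1"] by auto
    then show ?thesis using kup_len[OF k] kup_ne[OF k] by (auto simp: isproj_def ismod_def)
  qed
  then show ?thesis by (auto simp: dclosed_def torsionless_def)
qed

lemma ulen_props: assumes k: "kupisch K"
  shows "1 \<le> ulen K d" "ulen K d \<le> K!(length K - 1)"
    "\<And>i. i < ulen K d \<Longrightarrow> dclosed K d (length K - K!(length K - 1) + i)"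
proof -
  define P where "P = (\<lambda>m. m \<le> K!(length K - 1) \<and> (\<forall>i<m. dclosed K d (length K - K!(length K - 1) + i)))"
  have u: "ulen K d = Greatest P" by (simp add: ulen_def P_def)
  have l1: "1 \<le> K!(length K - 1)" using kup_le[OF k, of "length K - 1"] kup_ne[OF k] by auto
  have P1: "P 1" using socle_dclosed[OF k] l1 by (auto simp: P_def)
  have bd: "\<And>y. P y \<Longrightarrow> y \<le> K!(length K - 1)" by (simp add: P_def)
  have PG: "P (Greatest P)" by (rule GreatestI_nat[of P 1 "K!(length K - 1)", OF P1 bd])
  show "1 \<le> ulen K d" unfolding u by (rule Greatest_le_nat[of P 1 "K!(length K - 1)", OF P1 bd])
  show "ulen K d \<le> K!(length K - 1)" using PG u by (simp add: P_def)
  show "\<And>i. i < ulen K d \<Longrightarrow> dclosed K d (length K - K!(length K - 1) + i)" using PG u by (simp add: P_def)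
qed

lemma ulen_one: assumes k: "kupisch K" and l2: "2 \<le> K!(length K - 1)"
  and nd: "\<not> dclosed K d (length K - K!(length K - 1) + 1)"
  shows "ulen K d = 1"
proof (rule ccontr)
  assume "ulen K d \<noteq> 1"
  then have "1 < ulen K d" using ulen_props(1)[OF k, of d] by simp
  then show False using ulen_props(3)[OF k, of 1 d] nd by simp
qed

lemma ulen_two: assumes k: "kupisch K" and l2: "2 \<le> K!(length K - 1)"
  and dc: "dclosed K d (length K - K!(length K - 1) + 1)"
  shows "2 \<le> ulen K d"
proof -
  define P where "P = (\<lambda>m. m \<le> K!(length K - 1) \<and> (\<forall>i<m. dclosed K d (length K - K!(length K - 1) + i)))"
  have u: "ulen K d = Greatest P" by (simp add: ulen_def P_def)
  have P2: "P 2" using socle_dclosed[OF k] l2 dc by (auto simp: P_def less_2_cases_iff)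
  have bd: "\<And>y. P y \<Longrightarrow> y \<le> K!(length K - 1)" by (simp add: P_def)
  show ?thesis unfolding u by (rule Greatest_le_nat[of P 2 "K!(length K - 1)", OF P2 bd])
qed

lemma cliff_le: "kupisch K \<Longrightarrow> cliff_len K d + 1 \<le> K!(length K - 1)"
  using ulen_props[of K d] by (simp add: cliff_len_def)

lemma Ed_cases: assumes k: "kupisch K"
  shows "(cliff_len K d = 0 \<and> Ed d K = K) \<or> (cliff_len K d \<noteq> 0 \<and> Ed d K = K @ [cliff_len K d + 1])"
  by (simp add: Ed_def)

lemma kup_snoc: "kupisch K \<Longrightarrow> 2 \<le> x \<Longrightarrow> x \<le> K!(length K - 1) + 1 \<Longrightarrow> kupisch (K @ [x])"
  unfolding kupisch_def by (auto simp: nth_append) (metis One_nat_def Suc_pred less_antisym)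

lemma Ed_kup: assumes k: "kupisch K" shows "kupisch (Ed d K)"
  using k Ed_cases[OF k, of d] cliff_le[OF k, of d] kup_snoc[OF k] by auto

lemma Ed_tail: assumes k: "kupisch K"
  shows "\<exists>R. (Ed d ^^ i) K = K @ R \<and> (\<forall>x\<in>set R. x \<le> cliff_len K d + 1) \<and> kupisch ((Ed d ^^ i) K)"
proof (induction i)
  case 0 then show ?case using k by auto
next
  case (Suc i)
  then obtain R where R: "(Ed d ^^ i) K = K @ R" "\<forall>x\<in>set R. x \<le> cliff_len K d + 1" "kupisch ((Ed d ^^ i) K)" by blast
  define C where "C = (Ed d ^^ i) K"
  have kC: "kupisch C" using R by (simp add: C_def)
  have lastC: "cliff_len C d + 1 \<le> cliff_len K d + 1"
  proof (cases "R = []")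
    case True then show ?thesis using R by (simp add: C_def)
  next
    case False
    have "C \<noteq> []" using kC by (simp add: kupisch_def)
    then have "C!(length C - 1) = last C" by (simp add: last_conv_nth)
    also have "last C = last R" using R False by (simp add: C_def)
    finally have "C!(length C - 1) = last R" .
    moreover have "last R \<le> cliff_len K d + 1" using R False by simp
    ultimately show ?thesis using cliff_le[OF kC, of d] by simp
  qed
  have E: "(Ed d ^^ Suc i) K = Ed d C" by (simp add: C_def)
  have kE: "kupisch (Ed d C)" by (rule Ed_kup[OF kC])
  have "\<exists>R'. Ed d C = K @ R' \<and> (\<forall>x\<in>set R'. x \<le> cliff_len K d + 1)"
  proof (cases "cliff_len C d = 0")
    case True
    then have "Ed d C = C" by (simp add: Ed_def)
    then show ?thesis using R by (auto simp: C_def)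
  next
    case False
    then have "Ed d C = K @ (R @ [cliff_len C d + 1])" using R by (simp add: Ed_def C_def)
    then show ?thesis using R lastC by (intro exI[of _ "R @ [cliff_len C d + 1]"]) auto
  qed
  then obtain R' where "Ed d C = K @ R'" "\<forall>x\<in>set R'. x \<le> cliff_len K d + 1" by blast
  then show ?case using E kE by (intro exI[of _ R']) simp
qed


lemma rep_nth1: "i < length K \<Longrightarrow> (K @ replicate r l)!i = K!i"
  by (simp add: nth_append)

lemma rep_nth2: "kupisch K \<Longrightarrow> l = K!(length K - 1) \<Longrightarrow> length K - 1 \<le> i \<Longrightarrow> i < length K + r \<Longrightarrow>
   (K @ replicate r l)!i = l"
proof (cases "i < length K")
  case True
  assume "length K - 1 \<le> i" "l = K!(length K - 1)"
  moreover from True this have "i = length K - 1" by linarith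
  ultimately show ?thesis using True by (simp add: nth_append)
next
  case False
  assume "i < length K + r"
  then show ?thesis using False by (simp add: nth_append)
qed

lemma rep_last: "kupisch K \<Longrightarrow> l = K!(length K - 1) \<Longrightarrow>
   (K @ replicate r l)!(length (K @ replicate r l) - 1) = l"
  using rep_nth2[of K l "length K + r - 1" r] kup_ne[of K] by simp

lemma rep_kup: assumes k: "kupisch K" and l: "l = K!(length K - 1)" and l2: "2 \<le> l"
  shows "kupisch (K @ replicate r l)"
proof (induction r)
  case 0 then show ?case using k by simp
next
  case (Suc r)
  have "K @ replicate (Suc r) l = (K @ replicate r l) @ [l]"
    by (simp add: replicate_append_same[symmetric])
  moreover have "kupisch ((K @ replicate r l) @ [l])"
    by (rule kup_snoc[OF Suc.IH l2]) (use rep_last[OF k l, of r] in simp)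
  ultimately show ?case by simp
qed

lemma rep_growth: assumes k: "kupisch K" and l: "l = K!(length K - 1)" and l2: "2 \<le> l"
  shows "length K - l \<le> w \<Longrightarrow> w + q * l < length K + r \<Longrightarrow>
    pd (K @ replicate r l) (w + q * l) (w + q * l) = 2 * q + pd (K @ replicate r l) w w"
proof (induction q)
  case 0 then show ?case by simp
next
  case (Suc q)
  define G where "G = K @ replicate r l"
  define a where "a = w + Suc q * l"
  have ln: "l \<le> length K" using kup_len[OF k] l by simp
  have n1: "1 \<le> length K" using kup_ne[OF k] .
  have "pd G a a = Suc (Suc (pd G (a - l) (a - l)))"
  proof (rule shift)
    show "a \<le> a" by simp
    show "a < length G" using Suc.prems by (simp add: G_def a_def)
    show "a + 1 - a < l" using l2 by simp
    show "G!a = l" unfolding G_def using rep_nth2[OF k l] Suc.prems ln by (simp add: a_def)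
    show "G!(a-1) = l" unfolding G_def using rep_nth2[OF k l, of "a-1" r] Suc.prems ln l2 by (simp add: a_def)
    show "l \<le> a" by (simp add: a_def)
  qed
  moreover have "a - l = w + q * l" by (simp add: a_def)
  moreover have "pd G (w + q * l) (w + q * l) = 2 * q + pd G w w"
    using Suc by (simp add: G_def)
  ultimately show ?case by (simp add: G_def a_def)
qed

lemma Cd_term: assumes k: "kupisch K" and d1: "1 \<le> d"
  shows "\<exists>T. cliff_len ((Ed d ^^ T) K) d = 0"
  using k
proof (induction "K!(length K - 1)" arbitrary: K rule: less_induct)
  case less
  define l where "l = K!(length K - 1)"
  have kK: "kupisch K" using less.prems .
  show ?case
  proof (cases "\<exists>j. cliff_len ((Ed d ^^ j) K) d = 0 \<or>
      (\<lambda>X. X!(length X - 1)) ((Ed d ^^ j) K) < l")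
    case True
    then obtain j where j: "cliff_len ((Ed d ^^ j) K) d = 0 \<or> (\<lambda>X. X!(length X - 1)) ((Ed d ^^ j) K) < l" by blast
    show ?thesis
    proof (cases "cliff_len ((Ed d ^^ j) K) d = 0")
      case True then show ?thesis by blast
    next
      case False
      define C where "C = (Ed d ^^ j) K"
      have kC: "kupisch C" using Ed_tail[OF kK, where d=d and i=j] by (auto simp: C_def)
      have "C!(length C - 1) < K!(length K - 1)" using j False by (simp add: C_def l_def)
      then obtain T where "cliff_len ((Ed d ^^ T) C) d = 0" using less.hyps kC by blast
      then have "cliff_len ((Ed d ^^ (T + j)) K) d = 0" by (simp add: funpow_add C_def)
      then show ?thesis by blast
    qed
  next
    case False
    then have F: "\<And>j. cliff_len ((Ed d ^^ j) K) d \<noteq> 0"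
      "\<And>j. l \<le> (\<lambda>X. X!(length X - 1)) ((Ed d ^^ j) K)" by (auto simp: not_less)
    have l2: "2 \<le> l"
    proof (rule ccontr)
      assume "\<not> 2 \<le> l"
      then have "cliff_len K d + 1 \<le> 1" using cliff_le[OF kK, of d] by (simp add: l_def)
      then show False using F(1)[of 0] by simp
    qed
    have rep: "\<And>j. (Ed d ^^ j) K = K @ replicate j l"
    proof -
      fix j show "(Ed d ^^ j) K = K @ replicate j l"
      proof (induction j)
        case 0 then show ?case by simp
      next
        case (Suc j)
        define C where "C = K @ replicate j l"
        have kC: "kupisch C" using rep_kup[OF kK l_def l2] by (simp add: C_def)
        have lC: "C!(length C - 1) = l" using rep_last[OF kK l_def] by (simp add: C_def)
        have c0: "cliff_len C d \<noteq> 0" using F(1)[of j] Suc by (simp add: C_def)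
        have "(Ed d ^^ Suc j) K = Ed d C" using Suc.IH by (simp add: C_def)
        also have "Ed d C = C @ [cliff_len C d + 1]" using c0 by (simp add: Ed_def)
        finally have E: "(Ed d ^^ Suc j) K = C @ [cliff_len C d + 1]" .
        have "l \<le> cliff_len C d + 1" using F(2)[of "Suc j"] E by simp
        moreover have "cliff_len C d + 1 \<le> l" using cliff_le[OF kC, of d] lC by simp
        ultimately have "cliff_len C d + 1 = l" by simp
        then show ?case using E by (simp add: C_def replicate_append_same[symmetric])
      qed
    qed
    define R0 where "R0 = (d + 1) * l - 1"
    define C where "C = K @ replicate R0 l"
    define n where "n = length K"
    have kC: "kupisch C" using rep_kup[OF kK l_def l2] by (simp add: C_def)
    have lC: "C!(length C - 1) = l" using rep_last[OF kK l_def] by (simp add: C_def)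
    have lenC: "length C = n + R0" by (simp add: C_def n_def)
    have ln: "l \<le> n" using kup_len[OF kK] by (simp add: l_def n_def)
    have R0: "R0 = d * l + l - 1" by (simp add: R0_def algebra_simps)
    have v: "length C - C!(length C - 1) + 1 = n + d * l" using lenC lC R0 l2 ln by simp
    have "pd C (n + d * l) (n + d * l) = 2 * d + pd C n n"
      unfolding C_def by (rule rep_growth[OF kK l_def l2]) (use R0 l2 in \<open>auto simp: n_def\<close>)
    then have "d \<le> pd C (n + d * l) (n + d * l)" by simp
    moreover have "ismod C (n + d * l) (n + d * l)"
      using lenC R0 l2 kup_le[OF kC, of "n + d * l"] by (auto simp: ismod_def)
    ultimately have "dclosed C d (length C - C!(length C - 1) + 1)" unfolding v dclosed_def by blast
    then have "2 \<le> ulen C d" using ulen_two[OF kC] lC l2 by simp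
    then have "cliff_len C d + 1 < l" using ulen_props(2)[OF kC, of d] lC by (simp add: cliff_len_def)
    moreover have "(Ed d ^^ Suc R0) K = C @ [cliff_len C d + 1]"
    proof -
      have "(Ed d ^^ Suc R0) K = Ed d C" using rep[of R0] by (simp add: C_def)
      also have "Ed d C = C @ [cliff_len C d + 1]" using F(1)[of R0] rep[of R0] by (simp add: Ed_def C_def)
      finally show ?thesis .
    qed
    ultimately show ?thesis using F(2)[of "Suc R0"] by simp
  qed
qed


section \<open>The ascent algebra\<close>

lemma ascent_props:
  assumes odd: "\<forall>c\<in>set cs. odd c" and so: "sorted (rev cs)"
  defines "cc \<equiv> cs @ [1]"
  shows "winv (ascent (0 # cc)) cc \<and> omega_char (ascent (0 # cc)) = 0 # cc \<and>
         (ascent (0 # cc))!(length (ascent (0 # cc)) - 2) = length cs + 1"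
proof -
  obtain B where B: "winv B cs" using winv_exists[OF odd so] by blast
  define K where "K = B @ [length cs + 2]"
  have wK: "winv K cc" using inv_delta0[OF B odd] by (simp add: K_def cc_def)
  have aK: "ascending K" using wK by (simp add: winv_def)
  have kK: "kupisch K" using aK by (simp add: ascending_def)
  define n where "n = length K"
  define m where "m = length cc + 1"
  define s where "s = n - m"
  have lastK: "K!(n-1) = m" using wK by (simp add: winv_def n_def m_def)
  have mn: "m \<le> n" using wK by (simp add: winv_def n_def m_def)
  have m2: "2 \<le> m" by (simp add: m_def cc_def)
  have occ: "\<forall>c\<in>set cc. odd c" using odd by (simp add: cc_def)
  have oc: "omega_char K = 0 # cc"
  proof -
    have "omega_char K = map (\<lambda>i. oddp (pd K i i)) [s..<n]"
      using oc_eq[OF kK] lastK by (simp add: n_def s_def)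
    also have "\<dots> = 0 # cc"
    proof (rule nth_equalityI)
      show "length (map (\<lambda>i. oddp (pd K i i)) [s..<n]) = length (0 # cc)"
        using mn by (simp add: s_def m_def)
      fix k assume k: "k < length (map (\<lambda>i. oddp (pd K i i)) [s..<n])"
      then have km: "k < m" using mn by (simp add: s_def)
      have e: "map (\<lambda>i. oddp (pd K i i)) [s..<n] ! k = oddp (pd K (s + k) (s + k))"
        using k by simp
      show "map (\<lambda>i. oddp (pd K i i)) [s..<n] ! k = (0 # cc) ! k"
      proof (cases k)
        case 0
        have "pd K s (s + 1 - 1) = cc!(1-1) - 1"
          by (rule winv_T2[OF wK]) (auto simp: s_def n_def m_def cc_def)
        moreover have "odd (cc!0)" using occ by (simp add: cc_def nth_append)
        ultimately show ?thesis using e 0 by (auto simp: oddp_def)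
      next
        case (Suc k')
        have "pd K (s + k) (s + (k + 1) - 1) = cc!(k-1)"
          by (rule winv_T1[OF wK]) (use km Suc in \<open>auto simp: s_def n_def m_def\<close>)
        moreover have "odd (cc!(k-1))" using occ km Suc by (auto simp: m_def)
        ultimately show ?thesis using e Suc by (simp add: oddp_def)
      qed
    qed
    finally show ?thesis .
  qed
  have uniq: "ascent (0 # cc) = K"
    unfolding ascent_def
  proof (rule the_equality)
    show "ascending K \<and> omega_char K = 0 # cc" using aK oc by simp
    fix L assume "ascending L \<and> omega_char L = 0 # cc"
    then show "L = K" using asc_inj[of L K] aK oc by simp
  qed
  have "K!(length K - 2) = length cs + 1"
  proof -
    have lB: "1 \<le> length B" using B by (simp add: winv_def)
    then have "length K - 2 = length B - 1" by (simp add: K_def)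
    moreover have "length B - 1 < length B" using lB by simp
    ultimately have "K!(length K - 2) = B!(length B - 1)" unfolding K_def by (simp only: nth_append) simp
    then show ?thesis using B by (simp add: winv_def)
  qed
  then show ?thesis using wK oc uniq by simp
qed


context
  fixes d :: nat and cs :: "nat list"
  assumes oddd: "odd d" and oddcs: "\<forall>c\<in>set cs. odd c" and socs: "sorted (rev cs)"
    and hdcs: "cs \<noteq> [] \<longrightarrow> hd cs \<le> d"
begin

definition "cc = cs @ [1]"
definition "KK = ascent (0 # cc)"
definition "mm = length cs + 2"
definition "nn = length KK"
definition "ss = nn - mm"
definition "c1 = hd cc"
definition "tt = (d - c1) div 2"

lemma wK: "winv KK cc" and ocK: "omega_char KK = 0 # cc" and K2: "KK!(nn - 2) = mm - 1"
  using ascent_props[OF oddcs socs] by (auto simp: KK_def cc_def nn_def mm_def)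

lemma aK: "ascending KK" using wK by (simp add: winv_def)
lemma kK: "kupisch KK" using aK by (simp add: ascending_def)
lemma lastK: "KK!(nn-1) = mm" using wK by (simp add: winv_def nn_def mm_def cc_def)
lemma mn: "mm \<le> nn" using wK by (simp add: winv_def nn_def mm_def cc_def)
lemma m2: "2 \<le> mm" by (simp add: mm_def)
lemma n2: "2 \<le> nn" using mn m2 by simp
lemma lcc: "length cc = mm - 1" by (simp add: cc_def mm_def)
lemma cc_odd: "i < length cc \<Longrightarrow> odd (cc!i)" using oddcs by (auto simp: cc_def nth_append)
lemma cc_le: "i < length cc \<Longrightarrow> cc!i \<le> c1"
proof -
  assume i: "i < length cc"
  have "sorted (rev cc)" using socs oddcs by (simp add: cc_def) (metis odd_pos less_imp_le_nat Suc_leI One_nat_def)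
  then show ?thesis using sorted_rev_nth_mono[of cc 0 i] i by (simp add: c1_def hd_conv_nth cc_def)
qed
lemma c1_odd: "odd c1" using cc_odd[of 0] by (simp add: c1_def hd_conv_nth cc_def)
lemma c1_le_d: "c1 \<le> d"
proof (cases "cs = []")
  case True
  have "odd d" by (rule oddd)
  then have "1 \<le> d" by (metis odd_pos Suc_leI One_nat_def)
  then show ?thesis unfolding c1_def cc_def using True by simp
next
  case False then show ?thesis using hdcs by (simp add: c1_def cc_def)
qed
lemma d_eq: "d = c1 + 2 * tt"
  using c1_le_d c1_odd oddd unfolding tt_def by presburger

lemma Kle: "i < nn - 1 \<Longrightarrow> KK!i \<le> mm - 1"
proof -
  assume i: "i < nn - 1"
  have "KK!i \<le> KK!(nn-2)" using aK i by (intro sorted_nth_mono) (auto simp: ascending_def nn_def)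
  then show ?thesis using K2 by simp
qed

lemma T1: "1 \<le> i \<Longrightarrow> i < j \<Longrightarrow> j \<le> mm \<Longrightarrow> pd KK (ss + i) (ss + j - 1) = cc!(i-1)"
  by (rule winv_T1[OF wK]) (auto simp: ss_def nn_def lcc)

lemma T2: "1 \<le> j \<Longrightarrow> j \<le> mm - 1 \<Longrightarrow> pd KK ss (ss + j - 1) = cc!(j-1) - 1"
  by (rule winv_T2[OF wK]) (auto simp: ss_def nn_def lcc)

lemma nnss: "nn = ss + mm" using mn by (simp add: ss_def)

lemma Gnth: "nn - 1 \<le> i \<Longrightarrow> i < nn + M \<Longrightarrow> (KK @ replicate M mm)!i = mm"
  using rep_nth2[OF kK, of mm i M] lastK by (simp add: nn_def)

lemma bound:
  "ss \<le> a \<Longrightarrow> a \<le> b \<Longrightarrow> b < nn + M \<Longrightarrow> b + 1 - a \<le> mm \<Longrightarrow>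
   pd (KK @ replicate M mm) a b \<le> 2 * ((a - ss) div mm) + (if (a - ss) mod mm = 0 then c1 - 1 else c1 + 1)"
proof (induction a arbitrary: b rule: less_induct)
  case (less a)
  define G where "G = KK @ replicate M mm"
  have lenG: "length G = nn + M" by (simp add: G_def nn_def)
  show ?case
  proof (cases "a < nn")
    case aT: True
    show ?thesis
    proof (cases "b < nn")
      case bT: True
      have pG: "pd G a b = pd KK a b" unfolding G_def by (rule pd_app) (use bT in \<open>simp add: nn_def\<close>)
      show ?thesis
      proof (cases "a = ss")
        case True
        define j where "j = b - ss + 1"
        have j1: "1 \<le> j" and jm: "j \<le> mm" and bj: "b = ss + j - 1"
          using less.prems bT True nnss by (auto simp: j_def)
        have "pd KK a b \<le> c1 - 1"
        proof (cases "j \<le> mm - 1")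
          case True
          have "pd KK ss (ss + j - 1) = cc!(j-1) - 1" by (rule T2[OF j1 True])
          moreover have "cc!(j-1) \<le> c1" using cc_le[of "j-1"] True j1 lcc by simp
          ultimately show ?thesis using bj \<open>a = ss\<close> by simp
        next
          case False
          then have "b = nn - 1" using bj jm nnss by simp
          then have "pd KK a b = 0" using \<open>a = ss\<close> lastK mn m2
            by (intro pd_proj) (auto simp: ismod_def ss_def nn_def)
          then show ?thesis by simp
        qed
        then have X: "pd G a b \<le> c1 - 1" using pG by simp
        have "a - ss = 0" using True by simp
        then show ?thesis using X unfolding G_def by simp
      next
        case False
        define i where "i = a - ss"
        define j where "j = b - ss + 1"
        have ij: "1 \<le> i" "i < j" "j \<le> mm" "a = ss + i" "b = ss + j - 1"
          using less.prems bT False nnss by (auto simp: i_def j_def)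
        have "pd KK a b = cc!(i-1)" using T1[OF ij(1-3)] ij by simp
        also have "\<dots> \<le> c1" using cc_le[of "i-1"] ij lcc by simp
        finally have "pd KK a b \<le> c1" .
        moreover have "i < mm" using ij by simp
        moreover have "a - ss = i" using ij by simp
        ultimately show ?thesis using pG ij(1) unfolding G_def by simp
      qed
    next
      case bF: False
      have a1: "ss + 1 \<le> a" using less.prems bF nnss by simp
      have Gb: "G!b = mm" using Gnth[of b M] less.prems bF by (simp add: G_def)
      have "pd G a b \<le> c1 + 1"
      proof (cases "b + 1 - a = mm")
        case True
        then have "pd G a b = 0" using Gb less.prems lenG by (intro pd_proj) (auto simp: ismod_def)
        then show ?thesis by simp
      next
        case False
        have mG: "ismod G a b" using Gb less.prems lenG by (auto simp: ismod_def)
        have "pd G a b = Suc (pd G (b + 1 - G!b) (a - 1))"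
          by (rule pd_step[OF mG]) (use a1 False Gb in auto)
        also have "pd G (b + 1 - G!b) (a - 1) = pd KK (b + 1 - mm) (a - 1)"
          unfolding Gb unfolding G_def by (rule pd_app) (use aT in \<open>simp add: nn_def\<close>)
        also have "pd KK (b + 1 - mm) (a - 1) = cc!(b + 1 - mm - ss - 1)"
        proof -
          define i where "i = b + 1 - mm - ss"
          define j where "j = a - ss"
          have ij: "1 \<le> i" "i < j" "j \<le> mm" "b + 1 - mm = ss + i" "a - 1 = ss + j - 1"
            using less.prems bF aT False nnss a1 by (auto simp: i_def j_def)
          show ?thesis using T1[OF ij(1-3)] ij by (simp add: i_def)
        qed
        also have "cc!(b + 1 - mm - ss - 1) \<le> c1"
          using cc_le[of "b + 1 - mm - ss - 1"] lcc less.prems bF aT nnss by simp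
        finally show ?thesis by simp
      qed
      moreover have "a - ss < mm" "a - ss \<noteq> 0" using aT a1 nnss by auto
      ultimately show ?thesis by (simp add: G_def)
    qed
  next
    case aF: False
    have Gb: "G!b = mm" using Gnth[of b M] less.prems aF by (simp add: G_def)
    show ?thesis
    proof (cases "b + 1 - a = mm")
      case True
      then have "pd G a b = 0" using Gb less.prems lenG by (intro pd_proj) (auto simp: ismod_def)
      then show ?thesis by (simp add: G_def)
    next
      case False
      have "pd G a b = Suc (Suc (pd G (a - mm) (b - mm)))"
      proof (rule shift)
        show "a \<le> b" "b < length G" using less.prems lenG by auto
        show "b + 1 - a < mm" using less.prems False by simp
        show "G!b = mm" by (rule Gb)
        show "G!(a-1) = mm" using Gnth[of "a-1" M] less.prems aF by (simp add: G_def)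
        show "mm \<le> a" using aF mn by simp
      qed
      moreover have "pd G (a - mm) (b - mm) \<le> 2 * ((a - mm - ss) div mm) + (if (a - mm - ss) mod mm = 0 then c1 - 1 else c1 + 1)"
        unfolding G_def by (rule less.IH) (use less.prems aF m2 nnss in auto)
      moreover have "(a - ss) div mm = (a - mm - ss) div mm + 1" "(a - ss) mod mm = (a - mm - ss) mod mm"
      proof -
        obtain x where x: "x = a - mm - ss" by blast
        have ax: "a - ss = x + mm" using aF nnss x by simp
        have "mm \<noteq> 0" using m2 by simp
        then show "(a - ss) div mm = (a - mm - ss) div mm + 1" unfolding ax x[symmetric] by (simp add: div_add_self2)
        show "(a - ss) mod mm = (a - mm - ss) mod mm" unfolding ax x[symmetric] by simp
      qed
      ultimately show ?thesis unfolding G_def by simp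
    qed
  qed
qed

lemma lastK': "mm = KK!(length KK - 1)" using lastK by (simp add: nn_def)

lemma Gkup: "kupisch (KK @ replicate M mm)" by (rule rep_kup[OF kK lastK' m2])
lemma Glast: "(KK @ replicate M mm)!(length (KK @ replicate M mm) - 1) = mm" by (rule rep_last[OF kK lastK'])
lemma Glen: "length (KK @ replicate M mm) = nn + M" by (simp add: nn_def)
lemma Gle: "i < nn + M \<Longrightarrow> (KK @ replicate M mm)!i \<le> mm"
proof -
  assume i: "i < nn + M"
  show ?thesis
  proof (cases "i < nn - 1")
    case True
    then have il: "i < length KK" by (simp add: nn_def)
    then have "(KK @ replicate M mm)!i = KK!i" by (simp add: nth_append)
    then show ?thesis using Kle[of i] True by simp
  next
    case False then show ?thesis using Gnth[of i M] i by simp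
  qed
qed

lemma arithA: "r < M * T \<Longrightarrow> 2 \<le> (M::nat) \<Longrightarrow> 1 \<le> c \<Longrightarrow>
  2 * ((r+1) div M) + (if (r+1) mod M = 0 then c - 1 else c + 1) < c + 2*T"
proof -
  assume a: "r < M * T" "2 \<le> M" "1 \<le> c"
  define q where "q = (r+1) div M"
  define k where "k = (r+1) mod M"
  have rq: "r + 1 = q * M + k" by (simp add: q_def k_def)
  show ?thesis
  proof (cases "k = 0")
    case True
    then have "M * q = Suc r" using rq by (simp add: mult.commute)
    then have "M * q \<le> M * T" using a(1) by linarith
    then have "q \<le> T" using a(2) mult_le_cancel1[of M q T] by simp
    then show ?thesis unfolding q_def[symmetric] k_def[symmetric] using True a by simp
  next
    case False
    have "M * q + k = Suc r" using rq by (simp add: mult.commute)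
    then have "M * q < M * T" using a(1) False by linarith
    then show ?thesis unfolding q_def[symmetric] k_def[symmetric] using False a mult_less_cancel1[of M q T] by simp
  qed
qed

lemma cliffA: assumes r: "r < mm * tt" shows "cliff_len (KK @ replicate r mm) d = mm - 1"
proof -
  define G where "G = KK @ replicate r mm"
  have kG: "kupisch G" using Gkup by (simp add: G_def)
  have lG: "G!(length G - 1) = mm" using Glast by (simp add: G_def)
  have len: "length G = nn + r" using Glen by (simp add: G_def)
  define v where "v = ss + r + 1"
  have ws: "length G - G!(length G - 1) + 1 = v" using lG len nnss by (simp add: v_def)
  have nd: "\<not> dclosed G d v"
    unfolding dclosed_def torsionless_def isproj_def
  proof
    assume "(\<exists>b. ismod G v b \<and> b + 1 - v = G ! b) \<or> (\<exists>b. ismod G v b \<and> d \<le> pd G v b)"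
    then show False
    proof
      assume "\<exists>b. ismod G v b \<and> b + 1 - v = G ! b"
      then obtain b where b: "ismod G v b" "b + 1 - v = G!b" by blast
      have bl: "b < length G" "v \<le> b" using b by (auto simp: ismod_def)
      have "Suc b - G!b \<le> Suc (length G - 1) - G!(length G - 1)"
        using F_mono[OF kG, of b "length G - 1"] bl by simp
      moreover have "Suc b - G!b = v" using b bl by simp
      moreover have "Suc (length G - 1) - G!(length G - 1) = ss + r" using lG len nnss m2 by simp
      ultimately show False by (simp add: v_def)
    next
      assume "\<exists>b. ismod G v b \<and> d \<le> pd G v b"
      then obtain b where b: "ismod G v b" "d \<le> pd G v b" by blast
      have bl: "b < nn + r" "v \<le> b" "b + 1 - v \<le> G!b" using b len by (auto simp: ismod_def)
      have "G!b \<le> mm" using Gle[of b r] bl by (simp add: G_def)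
      then have "b + 1 - v \<le> mm" using bl by simp
      then have "pd G v b \<le> 2 * ((v - ss) div mm) + (if (v - ss) mod mm = 0 then c1 - 1 else c1 + 1)"
        unfolding G_def using bl by (intro bound) (auto simp: v_def)
      moreover have "v - ss = r + 1" by (simp add: v_def)
      ultimately have X: "pd G v b \<le> 2 * ((r+1) div mm) + (if (r+1) mod mm = 0 then c1 - 1 else c1 + 1)"
        by simp
      have "1 \<le> c1" using c1_odd by (cases c1) auto
      then have A: "2 * ((r+1) div mm) + (if (r+1) mod mm = 0 then c1 - 1 else c1 + 1) < c1 + 2 * tt"
        using arithA[OF r m2] by blast
      have "pd G v b < c1 + 2 * tt" using X A by linarith
      then show False using b d_eq by simp
    qed
  qed
  have "ulen G d = 1" by (rule ulen_one[OF kG]) (use lG m2 nd ws in auto)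
  then show ?thesis using lG by (simp add: cliff_len_def G_def)
qed

lemma cliffB: "cliff_len (KK @ replicate (mm * tt) mm) d + 1 < mm"
proof -
  define G where "G = KK @ replicate (mm * tt) mm"
  have kG: "kupisch G" using Gkup by (simp add: G_def)
  have lG: "G!(length G - 1) = mm" using Glast by (simp add: G_def)
  have len: "length G = nn + mm * tt" using Glen by (simp add: G_def)
  define v where "v = ss + 1 + tt * mm"
  have ws: "length G - G!(length G - 1) + 1 = v" using lG len nnss by (simp add: v_def)
  have "pd G v v = 2 * tt + pd G (ss + 1) (ss + 1)"
    unfolding G_def v_def by (rule rep_growth[OF kK lastK' m2]) (use nnss m2 in \<open>auto simp: nn_def\<close>)
  also have "pd G (ss + 1) (ss + 1) = pd KK (ss + 1) (ss + 1)"
    unfolding G_def by (rule pd_app) (use nnss m2 in \<open>simp add: nn_def\<close>)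
  also have "pd KK (ss + 1) (ss + 1) = cc!0"
    using T1[of 1 2] m2 by simp
  also have "cc!0 = c1" by (simp add: c1_def cc_def hd_conv_nth)
  finally have "pd G v v = d" using d_eq by simp
  moreover have "ismod G v v" using len lG kup_le[OF kG, of v] nnss m2 by (auto simp: ismod_def v_def)
  ultimately have "dclosed G d v" unfolding dclosed_def by auto
  then have "2 \<le> ulen G d" using ulen_two[OF kG] lG m2 ws by simp
  then show ?thesis using ulen_props(2)[OF kG, of d] lG by (simp add: cliff_len_def G_def)
qed

lemma EdC: "r \<le> mm * tt \<Longrightarrow> (Ed d ^^ r) KK = KK @ replicate r mm"
proof (induction r)
  case 0 then show ?case by simp
next
  case (Suc r)
  then have "(Ed d ^^ Suc r) KK = Ed d (KK @ replicate r mm)" by simp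
  also have "\<dots> = KK @ replicate r mm @ [mm]"
    using cliffA[of r] Suc.prems m2 by (simp add: Ed_def)
  also have "\<dots> = KK @ replicate (Suc r) mm" by (simp add: replicate_append_same[symmetric])
  finally show ?case .
qed

lemma H_shape: "\<exists>R. Cd d KK = KK @ replicate (mm * tt) mm @ R \<and> (\<forall>x\<in>set R. x < mm)"
proof -
  define P where "P = (\<lambda>T. cliff_len ((Ed d ^^ T) KK) d = 0)"
  have d1: "1 \<le> d" using c1_le_d c1_odd by (cases c1) auto
  obtain T where "P T" using Cd_term[OF kK d1] by (auto simp: P_def)
  then have PL: "P (Least P)" by (rule LeastI)
  have ge: "mm * tt \<le> Least P"
  proof (rule ccontr)
    assume "\<not> ?thesis"
    then have "Least P < mm * tt" by simp
    then have "cliff_len ((Ed d ^^ Least P) KK) d = mm - 1" using EdC cliffA by simp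
    then show False using PL m2 by (simp add: P_def)
  qed
  define G where "G = KK @ replicate (mm * tt) mm"
  have "Cd d KK = (Ed d ^^ Least P) KK" by (simp add: Cd_def P_def)
  also have "\<dots> = (Ed d ^^ (Least P - mm * tt)) ((Ed d ^^ (mm * tt)) KK)"
  proof -
    have e: "Least P = (Least P - mm * tt) + mm * tt" using ge by simp
    have "(Ed d ^^ ((Least P - mm * tt) + mm * tt)) KK = (Ed d ^^ (Least P - mm * tt)) ((Ed d ^^ (mm * tt)) KK)"
      by (simp only: funpow_add comp_def)
    then show ?thesis using e by metis
  qed
  also have "(Ed d ^^ (mm * tt)) KK = G" using EdC by (simp add: G_def)
  finally have C: "Cd d KK = (Ed d ^^ (Least P - mm * tt)) G" .
  obtain R where R: "(Ed d ^^ (Least P - mm * tt)) G = G @ R" "\<forall>x\<in>set R. x \<le> cliff_len G d + 1"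
    using Ed_tail[OF Gkup, where d=d and i="Least P - mm * tt"] by (auto simp: G_def)
  have "\<forall>x\<in>set R. x < mm" using R(2) cliffB by (fastforce simp: G_def)
  then show ?thesis using C R by (auto simp: G_def)
qed

definition "GG = KK @ replicate (mm * tt) mm"
definition "NN = nn + mm * tt"
definition "RR = (SOME R. Cd d KK = GG @ R \<and> (\<forall>x\<in>set R. x < mm))"
definition "HH = Hd d cs"

lemma HR: "HH = GG @ RR" "\<forall>x\<in>set RR. x < mm"
proof -
  have ex: "\<exists>R. Cd d KK = GG @ R \<and> (\<forall>x\<in>set R. x < mm)" using H_shape by (simp add: GG_def)
  have "Cd d KK = GG @ RR \<and> (\<forall>x\<in>set RR. x < mm)" unfolding RR_def by (rule someI_ex[OF ex])
  moreover have "HH = Cd d KK" by (simp add: HH_def Hd_def KK_def cc_def)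
  ultimately show "HH = GG @ RR" "\<forall>x\<in>set RR. x < mm" by auto
qed

lemma lenG: "length GG = NN" by (simp add: GG_def NN_def nn_def)
lemma lenH: "length HH = NN + length RR" using HR lenG by simp

lemma HH_nth_lt: "i < nn - 1 \<Longrightarrow> HH!i = KK!i"
proof -
  assume i: "i < nn - 1"
  have "HH = KK @ (replicate (mm * tt) mm @ RR)" using HR(1) by (simp add: GG_def)
  moreover have "i < length KK" using i by (simp add: nn_def)
  ultimately show ?thesis by (simp add: nth_append)
qed

lemma HH_nth_G: "i < NN \<Longrightarrow> HH!i = GG!i"
  using HR(1) lenG by (simp add: nth_append)

lemma HH_nth: "i < length HH \<Longrightarrow> HH!i \<le> mm \<and> (HH!i = mm \<longleftrightarrow> nn - 1 \<le> i \<and> i < NN)"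
proof -
  assume i: "i < length HH"
  show ?thesis
  proof (cases "i < NN")
    case True
    show ?thesis
    proof (cases "i < nn - 1")
      case True
      then show ?thesis using HH_nth_lt Kle m2 by fastforce
    next
      case False
      then have "HH!i = mm" using HH_nth_G[OF \<open>i < NN\<close>] Gnth[of i "mm * tt"] \<open>i < NN\<close>
        by (simp add: GG_def NN_def)
      then show ?thesis using False True by simp
    qed
  next
    case False
    then have "HH!i = RR!(i - NN)" using HR(1) lenG by (simp add: nth_append)
    moreover have "RR!(i - NN) \<in> set RR" using i False lenH by simp
    ultimately have "HH!i < mm" using HR(2) by simp
    then show ?thesis using False by simp
  qed
qed

lemma NN_ge: "nn \<le> NN" by (simp add: NN_def)

lemma HH_top: "HH!(nn-1) = mm"
proof -
  have "nn - 1 < length HH" using lenH NN_ge n2 by simp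
  moreover have "nn - 1 < NN" using NN_ge n2 by simp
  ultimately show ?thesis using HH_nth[of "nn - 1"] by simp
qed

lemma height_HH: "height HH = mm"
proof -
  define S where "S = {len a b | a b. ismod HH a b}"
  have le: "\<forall>y\<in>S. y \<le> mm"
  proof
    fix y assume "y \<in> S"
    then obtain a b where "y = len a b" "ismod HH a b" by (auto simp: S_def)
    then show "y \<le> mm" using HH_nth[of b] by (auto simp: ismod_def len_def)
  qed
  have fin: "finite S" using le by (metis finite_atMost finite_subset subsetI atMost_iff)
  have l: "nn - 1 < length HH" using lenH NN_ge n2 by simp
  have "ismod HH ss (nn - 1)" using HH_top l mn m2 by (auto simp: ismod_def ss_def)
  moreover have "len ss (nn - 1) = mm" using mn m2 by (simp add: len_def ss_def)
  ultimately have "mm \<in> S" unfolding S_def by force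
  then have "Max S = mm" using fin le by (intro Max_eqI) auto
  then show ?thesis by (simp add: height_def S_def)
qed

lemma summit_iff: "summit HH a b \<longleftrightarrow> nn - 1 \<le> b \<and> b < NN \<and> a = b + 1 - mm"
proof
  assume "summit HH a b"
  then have m: "ismod HH a b" and l: "len a b = height HH" by (auto simp: summit_def)
  have hS: "height HH = mm" by (rule height_HH)
  have "b + 1 - a = mm" using l hS by (simp add: len_def)
  moreover have "HH!b \<le> mm" "b + 1 - a \<le> HH!b" "b < length HH" using m HH_nth[of b] by (auto simp: ismod_def)
  ultimately have "HH!b = mm" "b < length HH" by auto
  then have "nn - 1 \<le> b \<and> b < NN" using HH_nth[of b] by auto
  then show "nn - 1 \<le> b \<and> b < NN \<and> a = b + 1 - mm" using \<open>b + 1 - a = mm\<close> m by (auto simp: ismod_def)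
next
  assume h: "nn - 1 \<le> b \<and> b < NN \<and> a = b + 1 - mm"
  have bl: "b < length HH" using h lenH by simp
  have Hb: "HH!b = mm" using HH_nth[OF bl] h by simp
  have mb: "mm \<le> b + 1" using h mn n2 by linarith
  have m: "ismod HH a b" using h bl Hb mb m2 by (auto simp: ismod_def)
  have hS: "height HH = mm" by (rule height_HH)
  show "summit HH a b" using m hS h mb by (simp add: summit_def len_def)
qed

lemma summits_eq: "summits HH = (\<lambda>b. (b + 1 - mm, b)) ` {nn - 1..<NN}"
  unfolding summits_def using summit_iff by auto

lemma card_summits: "card (summits HH) = mm * tt + 1"
proof -
  have "inj_on (\<lambda>b. (b + 1 - mm, b)) {nn - 1..<NN}" by (auto simp: inj_on_def)
  then have "card (summits HH) = card {nn - 1..<NN}" unfolding summits_eq by (rule card_image)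
  then show ?thesis using n2 by (simp add: NN_def)
qed

lemma first_iff: "first_summit HH p \<longleftrightarrow> p = (ss, nn - 1)"
proof (cases p)
  case (Pair a b)
  have "first_summit HH (a, b) \<longleftrightarrow> (a, b) = (ss, nn - 1)"
  proof
    assume f: "first_summit HH (a, b)"
    then have s: "nn - 1 \<le> b" "b < NN" "a = b + 1 - mm" using summit_iff by (auto simp: first_summit_def)
    have ab: "a \<noteq> b" using s m2 mn n2 by auto
    then have "isproj HH a (b - 1)" using f by (simp add: first_summit_def)
    then have e0: "(b - 1) + 1 - a = HH!(b-1)" by (auto simp: isproj_def)
    have "1 \<le> b" using s n2 by simp
    then have e: "b - a = HH!(b-1)" using e0 by simp
    have "b = nn - 1"
    proof (rule ccontr)
      assume "b \<noteq> nn - 1"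
      then have "nn - 1 \<le> b - 1" "b - 1 < NN" using s by auto
      then have "HH!(b-1) = mm" using HH_nth[of "b-1"] lenH by simp
      then show False using e s m2 mn n2 by simp
    qed
    then show "(a, b) = (ss, nn - 1)" using s nnss m2 by simp
  next
    assume "(a, b) = (ss, nn - 1)"
    then have ab: "a = ss" "b = nn - 1" by auto
    have sm: "summit HH a b" using summit_iff ab nnss m2 n2 by (simp add: NN_def)
    have "HH!(nn - 2) = mm - 1" using HH_nth_lt[of "nn - 2"] K2 n2 by simp
    then have "isproj HH a (b - 1)" using ab nnss m2 n2 lenH
      by (auto simp: isproj_def ismod_def NN_def numeral_2_eq_2)
    then show "first_summit HH (a, b)" using sm by (simp add: first_summit_def)
  qed
  then show ?thesis using Pair by simp
qed

lemma last_iff: "last_summit HH q \<longleftrightarrow> q = (NN - mm, NN - 1)"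
proof (cases q)
  case (Pair a b)
  have "last_summit HH (a, b) \<longleftrightarrow> (a, b) = (NN - mm, NN - 1)"
  proof
    assume f: "last_summit HH (a, b)"
    then have s: "nn - 1 \<le> b" "b < NN" "a = b + 1 - mm" using summit_iff by (auto simp: last_summit_def)
    have ab: "a \<noteq> b" using s m2 mn n2 by auto
    then have inj: "isinj HH (a + 1) b" using f by (simp add: last_summit_def)
    have "b = NN - 1"
    proof (rule ccontr)
      assume "b \<noteq> NN - 1"
      then have b1: "b + 1 < NN" using s by simp
      then have "HH!(b+1) = mm" using HH_nth[of "b+1"] lenH s by simp
      then have "ismod HH (a + 1) (b + 1)" using b1 lenH s m2 mn n2 by (auto simp: ismod_def)
      then show False using inj by (simp add: isinj_def)
    qed
    then show "(a, b) = (NN - mm, NN - 1)" using s m2 mn n2 by (simp add: NN_def)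
  next
    assume "(a, b) = (NN - mm, NN - 1)"
    then have ab: "a = NN - mm" "b = NN - 1" by auto
    have NNn: "nn \<le> NN" by (simp add: NN_def)
    have sm: "summit HH a b" using summit_iff ab m2 mn n2 NNn by auto
    have "HH!b = mm" using HH_nth[of b] ab lenH n2 NNn by simp
    then have m1: "ismod HH (a + 1) b" using ab lenH m2 mn n2 NNn by (auto simp: ismod_def)
    have m2': "\<not> ismod HH (a + 1) (b + 1)"
    proof
      assume m: "ismod HH (a + 1) (b + 1)"
      then have "b + 1 < length HH" "mm - 1 \<le> HH!(b+1)" using ab m2 mn n2 NNn by (auto simp: ismod_def)
      moreover have "b + 1 = NN" using ab n2 NNn by simp
      ultimately have "HH!(b+1) \<le> mm" "HH!(b+1) \<noteq> mm" using HH_nth[of "b+1"] by auto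
      then have "HH!(b+1) < mm" by simp
      moreover have "b + 1 + 1 - (a + 1) = mm" using ab m2 mn n2 NNn by simp
      ultimately show False using m by (simp add: ismod_def)
    qed
    have "a \<noteq> b" using ab m2 mn n2 NNn by simp
    then show "last_summit HH (a, b)" using sm m1 m2' by (simp add: last_summit_def isinj_def)
  qed
  then show ?thesis using Pair by simp
qed

lemma charm_first: "charm HH ss (nn - 1) = 0 # cc"
proof -
  have "HH = KK @ (replicate (mm * tt) mm @ RR)" using HR(1) by (simp add: GG_def)
  then have "charm HH ss (nn - 1) = charm KK ss (nn - 1)" using n2 by (simp add: charm_app nn_def)
  also have "\<dots> = omega_char KK" using lastK by (simp add: omega_char_def ss_def nn_def)
  finally show ?thesis using ocK by simp
qed

lemma charm_last: "charm HH (NN - mm) (NN - 1) = 0 # map (\<lambda>c. c + 2 * tt) cc"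
proof -
  have NNn: "nn \<le> NN" by (simp add: NN_def)
  have "charm HH (NN - mm) (NN - 1) = charm GG (NN - mm) (NN - 1)"
    using HR(1) lenG NNn n2 by (simp add: charm_app)
  also have "\<dots> = 0 # map (\<lambda>c. c + 2 * tt) cc"
  proof -
    have GGl: "GG!(NN - 1) = mm" using Gnth[of "NN - 1" "mm * tt"] NNn n2 by (simp add: GG_def NN_def)
    have p0: "pd GG (NN - mm) (NN - 1) = 0"
      by (rule pd_proj) (use GGl lenG NNn n2 mn m2 in \<open>auto simp: ismod_def\<close>)
    have up: "[NN - mm..<Suc (NN - 1)] = [NN - mm..<NN]" using NNn n2 by simp
    have pk: "pd GG (NN - mm + k) (NN - mm + k) = 2 * tt + pd KK (ss + k) (ss + k)" if k: "k < mm" for k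
    proof -
      have e: "NN - mm + k = (ss + k) + tt * mm" using NNn mn nnss by (simp add: NN_def)
      have "pd GG ((ss + k) + tt * mm) ((ss + k) + tt * mm) = 2 * tt + pd GG (ss + k) (ss + k)"
        unfolding GG_def by (rule rep_growth[OF kK lastK' m2]) (use k nnss in \<open>auto simp: nn_def\<close>)
      moreover have "pd GG (ss + k) (ss + k) = pd KK (ss + k) (ss + k)"
        unfolding GG_def by (rule pd_app) (use k nnss in \<open>simp add: nn_def\<close>)
      ultimately have X: "pd GG ((ss + k) + tt * mm) ((ss + k) + tt * mm) = 2 * tt + pd KK (ss + k) (ss + k)"
        by simp
      show ?thesis unfolding e by (rule X)
    qed
    show ?thesis
      unfolding charm_def up p0
    proof (rule nth_equalityI)
      show "length (map (\<lambda>i. if odd (pd GG i i) then pd GG i i else 0) [NN - mm..<NN]) = length (0 # map (\<lambda>c. c + 2 * tt) cc)"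
        using NNn mn lcc m2 by simp
      fix k assume "k < length (map (\<lambda>i. if odd (pd GG i i) then pd GG i i else 0) [NN - mm..<NN])"
      then have k: "k < mm" using NNn mn by simp
      have L: "map (\<lambda>i. if odd (pd GG i i) then pd GG i i else 0) [NN - mm..<NN] ! k =
          (if odd (pd GG (NN - mm + k) (NN - mm + k)) then pd GG (NN - mm + k) (NN - mm + k) else 0)"
        using k NNn mn by simp
      show "map (\<lambda>i. if odd (pd GG i i) then pd GG i i else 0) [NN - mm..<NN] ! k = (0 # map (\<lambda>c. c + 2 * tt) cc) ! k"
      proof (cases k)
        case 0
        have "pd KK ss (ss + 1 - 1) = cc!(1-1) - 1" by (rule T2) (use m2 in auto)
        moreover have "odd (cc!0)" using cc_odd[of 0] lcc m2 by simp
        ultimately have "even (2 * tt + pd KK (ss + 0) (ss + 0))" by simp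
        then show ?thesis using L pk[of 0] 0 m2 by simp
      next
        case (Suc k')
        have "pd KK (ss + k) (ss + (k + 1) - 1) = cc!(k-1)" by (rule T1) (use k Suc in auto)
        moreover have "odd (cc!(k-1))" using cc_odd[of "k-1"] lcc k Suc by simp
        ultimately have "odd (2 * tt + pd KK (ss + k) (ss + k))" "2 * tt + pd KK (ss + k) (ss + k) = cc!(k-1) + 2 * tt"
          by auto
        then show ?thesis using L pk[OF k] Suc k lcc by simp
      qed
    qed
  qed
  finally show ?thesis .
qed

lemma main_summary:
  "card (summits (Hd d cs)) = (length cs + 2) * ((d - hd (cs @ [1])) div 2) + 1 \<and>
   (\<exists>!p. first_summit (Hd d cs) p) \<and> (\<exists>!q. last_summit (Hd d cs) q) \<and>
   (\<forall>p. first_summit (Hd d cs) p \<longrightarrow> charm (Hd d cs) (fst p) (snd p) = 0 # cs @ [1]) \<and>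
   (\<forall>q. last_summit (Hd d cs) q \<longrightarrow> charm (Hd d cs) (fst q) (snd q) =
       0 # map (\<lambda>c. c + 2 * ((d - hd (cs @ [1])) div 2)) (cs @ [1])) \<and>
   2 * ((d - hd (cs @ [1])) div 2) = d - hd (cs @ [1])"
proof -
  have H: "Hd d cs = HH" by (simp add: HH_def)
  have ccf: "cs @ [1] = cc" by (simp add: cc_def)
  have t: "(d - hd cc) div 2 = tt" by (simp add: tt_def c1_def)
  have dd: "d - hd cc = 2 * tt" using d_eq by (simp add: c1_def)
  have m: "length cs + 2 = mm" by (simp add: mm_def)
  show ?thesis unfolding H ccf t dd m
    using card_summits first_iff last_iff charm_first charm_last by auto
qed

end

theorem theorem3:
  fixes d :: nat and cs :: "nat list"
  assumes "odd d"
    and "sorted (rev cs)"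
    and "\<forall>c\<in>set cs. odd c"
    and "cs \<noteq> [] \<longrightarrow> hd cs \<le> d"
  shows "(cs = [] \<longrightarrow>
            card (summits (Hd d cs)) = d \<and>
            (\<exists>!p. first_summit (Hd d cs) p) \<and> (\<exists>!q. last_summit (Hd d cs) q) \<and>
            (\<forall>p. first_summit (Hd d cs) p \<longrightarrow> charm (Hd d cs) (fst p) (snd p) = [0, 1]) \<and>
            (\<forall>q. last_summit (Hd d cs) q \<longrightarrow> charm (Hd d cs) (fst q) (snd q) = [0, d]))
       \<and> (cs \<noteq> [] \<longrightarrow>
            (let t = (d - hd cs) div 2 in
              2 * t = d - hd cs \<and>
              card (summits (Hd d cs)) = (length cs + 2) * t + 1 \<and>
              (\<exists>!p. first_summit (Hd d cs) p) \<and> (\<exists>!q. last_summit (Hd d cs) q) \<and>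
              (\<forall>p. first_summit (Hd d cs) p \<longrightarrow>
                   charm (Hd d cs) (fst p) (snd p) = 0 # cs @ [1]) \<and>
              (\<forall>q. last_summit (Hd d cs) q \<longrightarrow>
                   charm (Hd d cs) (fst q) (snd q) = 0 # map (\<lambda>c. c + 2 * t) cs @ [1 + 2 * t])))"
proof -
  note S = main_summary[OF assms(1) assms(3) assms(2) assms(4)]
  have d1: "1 \<le> d" using assms(1) by (cases d) auto
  show ?thesis
  proof (cases "cs = []")
    case True
    have e: "2 * ((d - 1) div 2) = d - 1" using S True by simp
    have "2 * ((d - 1) div 2) + 1 = d" using e d1 by simp
    then show ?thesis using S True by (simp add: e) 
  next
    case False
    have h: "hd (cs @ [1]) = hd cs" using False by simp
    show ?thesis using S False unfolding h Let_def by simp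
  qed
qed

end
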